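(* Let $\mathcal{K}=\mathcal{C}_\circ\setminus \mathcal{C}_\circ\mathcal{A}^+$. Then $\mathcal{K}$ is a prefix code and $\mathcal{K}^*=\mathcal{C}^*$. Moreover, every word of $\mathcal{C}^*$ admits a unique factorization $\kappa_{1}\kappa_{2}\cdots\kappa_{j}$ with $j\ge 0$ and all $\kappa_i\in\mathcal{K}$; that is, $\mathcal{K}$ generates $\mathcal{C}^*$ unambiguously.
   Context: Let $\mathcal{A}$ be a finite alphabet and $w\in\mathcal{A}^*$ a fixed word of length $\ell=|w|\ge 2$. The autocorrelation set of $w$ is $\mathcal{C}=\{\epsilon\}\cup\{e\in\mathcal{A}^+ : |e|<\ell \text{ and there exists } e'\in\mathcal{A}^+ \text{ with } we=e'w\}$, and $\mathcal{C}_\circ=\mathcal{C}\setminus\{\epsilon\}$. For languages $L_1,L_2$, $L_1L_2$ denotes concatenation and $L^*$ the Kleene star. Thus $\mathcal{K}=\mathcal{C}_\circ\setminus \mathcal{C}_\circ\mathcal{A}^+$ is the set of words of $\mathcal{C}_\circ$ that have no proper prefix lying in $\mathcal{C}_\circ$. *)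

theory Defs
  imports Main
begin

definition lconc :: "'a list set \<Rightarrow> 'a list set \<Rightarrow> 'a list set" where
  "lconc L1 L2 = {u @ v | u v. u \<in> L1 \<and> v \<in> L2}"

definition kstar :: "'a list set \<Rightarrow> 'a list set" where
  "kstar L = {concat ws | ws. set ws \<subseteq> L}"

definition plus_words :: "'a list set" where
  "plus_words = {u. u \<noteq> []}"

definition autocorr :: "'a list \<Rightarrow> 'a list set" where
  "autocorr w = {[]} \<union> {e. e \<noteq> [] \<and> length e < length w \<and>
                          (\<exists>e'. e' \<noteq> [] \<and> w @ e = e' @ w)}"

definition autocorr0 :: "'a list \<Rightarrow> 'a list set" where
  "autocorr0 w = autocorr w - {[]}"

definition Kset :: "'a list \<Rightarrow> 'a list set" where
  "Kset w = autocorr0 w - lconc (autocorr0 w) plus_words"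

definition prefix_code :: "'a list set \<Rightarrow> bool" where
  "prefix_code X \<longleftrightarrow> [] \<notin> X \<and> (\<forall>x\<in>X. \<forall>y\<in>X. (\<exists>z. y = x @ z) \<longrightarrow> x = y)"

end

theory Submission
  imports Defs
begin

lemma kstar_append: "u \<in> kstar L \<Longrightarrow> v \<in> kstar L \<Longrightarrow> u @ v \<in> kstar L"
proof -
  assume "u \<in> kstar L" "v \<in> kstar L"
  then obtain us vs where "u = concat us" "set us \<subseteq> L" "v = concat vs" "set vs \<subseteq> L"
    unfolding kstar_def by blast
  then have "u @ v = concat (us @ vs) \<and> set (us @ vs) \<subseteq> L" by simp
  then show ?thesis unfolding kstar_def by blast
qed

lemma kstar_single: "u \<in> L \<Longrightarrow> u \<in> kstar L"
  unfolding kstar_def by (rule CollectI, rule exI[of _ "[u]"]) auto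

lemma kstar_nil: "[] \<in> kstar L"
  unfolding kstar_def by (rule CollectI, rule exI[of _ "[]"]) auto

lemma kstar_concat: "set ws \<subseteq> kstar L \<Longrightarrow> concat ws \<in> kstar L"
  by (induction ws) (auto intro: kstar_append kstar_nil)

lemma key:
  assumes e: "e \<in> autocorr0 w" and k: "k \<in> autocorr0 w" and ez: "e = k @ z" and z: "z \<noteq> []"
  shows "z \<in> autocorr0 w"
proof -
  obtain e' where e': "w @ e = e' @ w" "length e < length w"
    using e unfolding autocorr0_def autocorr_def by auto
  obtain k' where k': "w @ k = k' @ w"
    using k unfolding autocorr0_def autocorr_def by auto
  have le: "length e' = length e" using arg_cong[OF e'(1), of length] by simp
  have lk: "length k' = length k" using arg_cong[OF k', of length] by simp
  have "k' @ (w @ z) = e' @ w" using e'(1) k' ez by (metis append.assoc)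
  then obtain us where us: "(k' = e' @ us \<and> us @ w @ z = w) \<or> (k' @ us = e' \<and> w @ z = us @ w)"
    by (auto simp: append_eq_append_conv2)
  have "\<exists>y. y \<noteq> [] \<and> w @ z = y @ w"
  proof (cases "k' = e' @ us \<and> us @ w @ z = w")
    case True
    then have "length (us @ w @ z) = length w" by simp
    with z show ?thesis by simp
  next
    case False
    with us have "w @ z = us @ w" by auto
    moreover have "us \<noteq> []" using z \<open>w @ z = us @ w\<close> by auto
    ultimately show ?thesis by blast
  qed
  moreover have "length z < length w" using e'(2) ez by simp
  ultimately have "z \<in> {e. e \<noteq> [] \<and> length e < length w \<and> (\<exists>e'. e' \<noteq> [] \<and> w @ e = e' @ w)}"
    using z by blast
  then show ?thesis unfolding autocorr0_def autocorr_def using z by blast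
qed

lemma C0_in_kstarK: "e \<in> autocorr0 w \<Longrightarrow> e \<in> kstar (Kset w)"
proof (induction "length e" arbitrary: e rule: less_induct)
  case less
  show ?case
  proof (cases "e \<in> Kset w")
    case True then show ?thesis by (rule kstar_single)
  next
    case False
    with less.prems obtain k z where kz: "e = k @ z" "k \<in> autocorr0 w" "z \<noteq> []"
      unfolding Kset_def lconc_def plus_words_def by auto
    have zC: "z \<in> autocorr0 w" using key[OF less.prems kz(2) kz(1) kz(3)] .
    have "k \<noteq> []" using kz(2) unfolding autocorr0_def by auto
    then have "length k < length e" "length z < length e" using kz by auto
    then have "k \<in> kstar (Kset w)" "z \<in> kstar (Kset w)"
      using less.hyps kz(2) zC by auto
    then show ?thesis using kz(1) kstar_append by blast
  qed
qed

lemma C_in_kstarK: "e \<in> autocorr w \<Longrightarrow> e \<in> kstar (Kset w)"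
  using C0_in_kstarK[of e w] kstar_nil[of "Kset w"]
  unfolding autocorr0_def by (cases "e = []") auto

lemma prefK: "prefix_code (Kset w)"
  unfolding prefix_code_def
proof (intro conjI ballI impI)
  show "[] \<notin> Kset w" unfolding Kset_def autocorr0_def by auto
next
  fix x y assume x: "x \<in> Kset w" and y: "y \<in> Kset w" and "\<exists>z. y = x @ z"
  then obtain z where yz: "y = x @ z" by blast
  show "x = y"
  proof (rule ccontr)
    assume "x \<noteq> y"
    then have "z \<noteq> []" using yz by auto
    then have "y \<in> lconc (autocorr0 w) plus_words"
      using x yz unfolding lconc_def plus_words_def Kset_def by auto
    with y show False unfolding Kset_def by auto
  qed
qed

lemma pc_nil: "prefix_code X \<Longrightarrow> x \<in> X \<Longrightarrow> x \<noteq> []"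
  unfolding prefix_code_def by auto

lemma pc_eq: "prefix_code X \<Longrightarrow> x \<in> X \<Longrightarrow> y \<in> X \<Longrightarrow> y = x @ z \<Longrightarrow> x = y"
  unfolding prefix_code_def by blast

lemma unique_dec:
  assumes pc: "prefix_code X"
  shows "set ks \<subseteq> X \<Longrightarrow> set ks' \<subseteq> X \<Longrightarrow> concat ks = concat ks' \<Longrightarrow> ks = ks'"
proof (induction ks arbitrary: ks')
  case Nil
  show ?case
  proof (cases ks')
    case (Cons b ks2)
    then have "b \<in> X" "b = []" using Nil.prems by auto
    then show ?thesis using pc_nil[OF pc] by blast
  qed simp
next
  case (Cons a ks)
  have aX: "a \<in> X" and ksX: "set ks \<subseteq> X" using Cons.prems(1) by auto
  show ?case
  proof (cases ks')
    case Nil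
    then have "a = []" using Cons.prems(3) by simp
    then show ?thesis using pc_nil[OF pc aX] by blast
  next
    case (Cons b ks2)
    have bX: "b \<in> X" and ks2X: "set ks2 \<subseteq> X" using Cons.prems(2) \<open>ks' = b # ks2\<close> by auto
    have eq: "a @ concat ks = b @ concat ks2" using Cons.prems(3) \<open>ks' = b # ks2\<close> by simp
    then obtain us where "(a = b @ us \<and> us @ concat ks = concat ks2) \<or> (a @ us = b \<and> concat ks = us @ concat ks2)"
      by (auto simp: append_eq_append_conv2)
    then have "a = b"
    proof
      assume "a = b @ us \<and> us @ concat ks = concat ks2"
      then show "a = b" using pc_eq[OF pc bX aX, of us] by simp
    next
      assume "a @ us = b \<and> concat ks = us @ concat ks2"
      then show "a = b" using pc_eq[OF pc aX bX, of us] by simp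
    qed
    then have "concat ks = concat ks2" using eq by simp
    then have "ks = ks2" using Cons.IH[OF ksX ks2X] by simp
    then show ?thesis using \<open>a = b\<close> \<open>ks' = b # ks2\<close> by simp
  qed
qed

theorem mainTheorem1:
  fixes w :: "'a::finite list"
  assumes "length w \<ge> 2"
  shows "prefix_code (Kset w) \<and> kstar (Kset w) = kstar (autocorr w) \<and>
         (\<forall>u \<in> kstar (autocorr w). \<exists>!ks. set ks \<subseteq> Kset w \<and> concat ks = u)"
proof -
  have sub: "Kset w \<subseteq> autocorr w" unfolding Kset_def autocorr0_def by auto
  have eq: "kstar (Kset w) = kstar (autocorr w)"
  proof
    show "kstar (Kset w) \<subseteq> kstar (autocorr w)" using sub unfolding kstar_def by blast
  next
    show "kstar (autocorr w) \<subseteq> kstar (Kset w)"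
    proof
      fix u assume "u \<in> kstar (autocorr w)"
      then obtain ws where "u = concat ws" "set ws \<subseteq> autocorr w" unfolding kstar_def by auto
      then show "u \<in> kstar (Kset w)" using C_in_kstarK kstar_concat[of ws "Kset w"] by blast
    qed
  qed
  have "\<forall>u \<in> kstar (autocorr w). \<exists>!ks. set ks \<subseteq> Kset w \<and> concat ks = u"
  proof
    fix u assume "u \<in> kstar (autocorr w)"
    then have "u \<in> kstar (Kset w)" using eq by simp
    then obtain ks where ks: "set ks \<subseteq> Kset w" "concat ks = u" unfolding kstar_def by auto
    show "\<exists>!ks. set ks \<subseteq> Kset w \<and> concat ks = u"
    proof (rule ex1I[of _ ks])
      show "set ks \<subseteq> Kset w \<and> concat ks = u" using ks by simp
    next
      fix ks' assume "set ks' \<subseteq> Kset w \<and> concat ks' = u"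
      then show "ks' = ks" using ks unique_dec[OF prefK, of ks' w ks] by simp
    qed
  qed
  then show ?thesis using prefK eq by blast
qed

end
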